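(* Let $m\ge2$ be an integer, $U_c=m^{-1/(m-1)}$, $g_c=U_c^m$, and $H_m=\sum_{k=1}^m\frac1k$. For $g>0$ consider the potential $$V(U)=\frac1g\sum_{k=1}^m\frac1k\,U_c^{m-k}\Big[U_c^k-(U_c-U)^k\Big].$$ Then $V(0)=0$, the coefficient of $U$ in $V$ is $1/g$, and $U V'(U)=\frac1g\big[U_c^m-(U_c-U)^m\big]$, so the self-consistency equation $UV'(U)=1$ reads $g=g_c-(U_c-U)^m$. Taking for $0<g<g_c$ the solution $U(g)=U_c-(g_c-g)^{1/m}$ (positive real root), the free energy $f_0(g)=V(U(g))-\ln U(g)$ satisfies, as $g\to g_c^-$, $$f_0(g)=f_0(g_c)+H_m\,\frac{g_c-g}{g_c}-\frac{m}{m+1}\Big(\frac{g_c-g}{g_c}\Big)^{1+\frac1m}+O\big((g_c-g)^{1+\frac2m}\big),$$ where $f_0(g_c)=H_m-\ln U_c$. Hence the entropy exponent (defined by $f_0^{\rm sing}\sim(g_c-g)^{2-\gamma}$) is $\gamma_m=1-\frac1m$.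
   Context: In the tensor model, the leading-order potential is $V(x)=\sum_{n\ge1}t_nx^n$ with $t_n$ the sum of couplings of melonic bubbles with $2n$ vertices, here parametrized as $t_1=1/g$, $t_n=\alpha_n/g$; the leading order two-point function $U$ solves $UV'(U)=1$ and the leading order free energy is $f_0=V(U)-\ln U$. A multicritical point of order $m$ is one where $\partial^j g/\partial U^j=0$ for $1\le j\le m-1$ and $\partial^m g/\partial U^m\neq0$. *)

theory Defs
  imports "HOL-Analysis.Analysis"
begin

definition Uc :: "nat \<Rightarrow> real" where
  "Uc m = real m powr (- 1 / (real m - 1))"

definition gc :: "nat \<Rightarrow> real" where
  "gc m = Uc m ^ m"

definition Hm :: "nat \<Rightarrow> real" where
  "Hm m = (\<Sum>k=1..m. 1 / real k)"

definition Vpot :: "nat \<Rightarrow> real \<Rightarrow> real \<Rightarrow> real" where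
  "Vpot m g U = (1 / g) * (\<Sum>k=1..m. (1 / real k) * Uc m ^ (m - k) * (Uc m ^ k - (Uc m - U) ^ k))"

definition Ug :: "nat \<Rightarrow> real \<Rightarrow> real" where
  "Ug m g = Uc m - (gc m - g) powr (1 / real m)"

definition f0 :: "nat \<Rightarrow> real \<Rightarrow> real" where
  "f0 m g = Vpot m g (Ug m g) - ln (Ug m g)"

end

theory Submission
  imports Defs
begin

lemma geo: "(U::real) * (\<Sum>k=1..m. u^(m-k)*(u-U)^(k-1)) = u^m - (u-U)^m"
proof -
  have "(\<Sum>k=1..m. u^(m-k)*(u-U)^(k-1)) = (\<Sum>i<m. u^(m - Suc i)*(u-U)^i)"
    by (rule sum.reindex_bij_witness[of _ Suc "\<lambda>k. k-1"]) auto
  moreover have "(u-U)^m - u^m = ((u-U) - u) * (\<Sum>i<m. u^(m - Suc i)*(u-U)^i)"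
    by (rule power_diff_sumr2)
  ultimately show ?thesis by (simp add: algebra_simps)
qed
lemma hasder: "((\<lambda>U. (1 / g) * (\<Sum>k=1..m. (1 / real k) * u ^ (m - k) * (u ^ k - (u - U) ^ k)))
   has_real_derivative (1/g) * (\<Sum>k=1..m. u^(m-k)*(u-U)^(k-1))) (at U)"
  apply (rule derivative_eq_intros refl)+
  apply (simp only: mult_zero_left add_0_left)
  apply (subst mult.commute[of _ "1/g"])
  apply (rule arg_cong[where f="\<lambda>x. 1/g*x"])
  apply (rule sum.cong)
   apply auto
  done

lemma sumreidx: "(\<Sum>k=Suc 0..N. (x::real)^(k - Suc 0)) = (\<Sum>i<N. x^i)"
    by (rule sum.reindex_bij_witness[of _ Suc "\<lambda>k. k-1"]) auto

lemma sumder: "((\<lambda>x. (\<Sum>k=1..N. x^k / real k)) has_real_derivative (\<Sum>i<N. (x::real)^i)) (at x)"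
proof -
  have e: "(\<Sum>k=1..N. x^(k-1)) = (\<Sum>i<N. x^i)"
    by (rule sum.reindex_bij_witness[of _ Suc "\<lambda>k. k-1"]) auto
  have "((\<lambda>x. (\<Sum>k=1..N. x^k / real k)) has_real_derivative (\<Sum>k=1..N. real k * x^(k - Suc 0) / real k)) (at x)"
    by (rule DERIV_sum, rule DERIV_cdivide, rule DERIV_pow)
  moreover have "(\<Sum>k=1..N. real k * x^(k - Suc 0) / real k) = (\<Sum>k=1..N. x^(k-1))"
    by (rule sum.cong) auto
  ultimately show ?thesis using e by simp
qed

lemma geo1: "(x::real) \<noteq> 1 \<Longrightarrow> 1/(1-x) - (\<Sum>i<N. x^i) = x^N/(1-x)"
  by (simp add: sum_gp_strict field_simps)

lemma Qbound:
  fixes t :: real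
  assumes "0 \<le> t" "t \<le> 1/2"
  shows "0 \<le> -ln(1-t) - (\<Sum>k=1..N. t^k / real k) \<and> -ln(1-t) - (\<Sum>k=1..N. t^k / real k) \<le> 2 * t^(N+1)"
proof
  let ?h = "\<lambda>x. -ln(1-x) - (\<Sum>k=1..N. x^k / real k)"
  have hd: "(?h has_real_derivative x^N/(1-x)) (at x)" if "x < 1" for x :: real
  proof -
    have "(?h has_real_derivative (-(-1/(1-x))) - (\<Sum>i<N. x^i)) (at x)"
      using that by (auto intro!: derivative_eq_intros simp: sumreidx)
    moreover have "(-(-1/(1-x))) - (\<Sum>i<N. x^i) = x^N/(1-x)" using geo1[of x N] that by simp
    ultimately show ?thesis by simp
  qed
  have "?h 0 \<le> ?h t"
  proof (rule DERIV_nonneg_imp_nondecreasing[OF assms(1)])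
    fix x assume x: "0 \<le> x" "x \<le> t"
    then have "x < 1" using assms by simp
    then show "\<exists>y. (?h has_real_derivative y) (at x) \<and> 0 \<le> y"
      using hd[of x] x by (intro exI[of _ "x^N/(1-x)"]) auto
  qed
  moreover have z: "(\<Sum>k=1..N. (0::real)^k / real k) = 0" by (rule sum.neutral) auto
  ultimately show "0 \<le> ?h t" by simp
  let ?p = "\<lambda>x. 2 * x^(N+1) - ?h x"
  have "?p 0 \<le> ?p t"
  proof (rule DERIV_nonneg_imp_nondecreasing[OF assms(1)])
    fix x assume x: "0 \<le> x" "x \<le> t"
    have "(?p has_real_derivative 2 * (real (N+1) * x^N) - x^N/(1-x)) (at x)"
    proof -
      have d1: "((\<lambda>x. 2*x^(N+1)) has_real_derivative 2*(real (N+1)*x^N)) (at x)"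
        using DERIV_cmult[OF DERIV_pow[of "N+1" x], of 2] by simp
      show ?thesis using DERIV_diff[OF d1 hd[of x]] x assms by simp
    qed
    moreover have "x^N/(1-x) \<le> 2 * (real (N+1) * x^N)"
    proof -
      have "x^N/(1-x) \<le> x^N / (1/2)"
        using x assms by (intro divide_left_mono) auto
      also have "\<dots> \<le> 2 * (real (N+1) * x^N)" using x
        by (simp add: mult_le_cancel_left1 mult_le_cancel_right1)
      finally show ?thesis .
    qed
    ultimately show "\<exists>y. (?p has_real_derivative y) (at x) \<and> 0 \<le> y" by (intro exI conjI) auto
  qed
  then show "?h t \<le> 2 * t^(N+1)" using z by simp
qed
lemma alg: "1 - (a::real) \<noteq> 0 \<Longrightarrow> M + 1 \<noteq> 0 \<Longrightarrow>
  (H - (t+P2))/(1-a) - (-(Q2 + (t+P2) + t*a/(M+1))) - H - H*a + M/(M+1)*(t*a) = a*((H*a - P2 - t*a)/(1-a)) + Q2"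
proof -
  assume a: "1 - a \<noteq> 0" and M: "M + 1 \<noteq> 0"
  have "t*a/(M+1) + M/(M+1)*(t*a) = (t*a + M*(t*a))/(M+1)" by (simp add: add_divide_distrib)
  also have "\<dots> = (t*a)*(M+1)/(M+1)" by (simp add: algebra_simps)
  also have "\<dots> = t*a" using M by simp
  finally have 1: "t*a/(M+1) + M/(M+1)*(t*a) = t*a" .
  have 2: "(H - (t+P2))/(1-a) + (t+P2 - H - H*a + t*a) = a*(H*a - P2 - t*a)/(1-a)"
  proof -
    have "(H - (t+P2))/(1-a) + (t+P2 - H - H*a + t*a) = ((H - (t+P2)) + (t+P2 - H - H*a + t*a)*(1-a))/(1-a)"
      using a by (simp add: add_divide_distrib)
    also have "(H - (t+P2)) + (t+P2 - H - H*a + t*a)*(1-a) = a*(H*a - P2 - t*a)" by (simp add: algebra_simps)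
    finally show ?thesis .
  qed
  show ?thesis using 1 2 by (simp add: algebra_simps)
qed

lemma main_est:
  fixes t H P :: real and m :: nat
  assumes m: "m \<ge> 2" and t: "0 < t" "t \<le> 1/2"
    and H: "H = (\<Sum>k=1..m. 1 / real k)" and P: "P = (\<Sum>k=1..m. t^k / real k)"
  shows "\<bar>(H - P)/(1 - t^m) - ln(1-t) - H - H*t^m + real m/(real m+1)*t^(m+1)\<bar> \<le> (4*H+4)*t^(m+2)"
proof -
  define Q2 where "Q2 = -ln(1-t) - (\<Sum>k=1..m+1. t^k/real k)"
  have Q2b: "0 \<le> Q2" "Q2 \<le> 2*t^(m+2)" using Qbound[OF _ t(2), of "m+1"] t by (auto simp: Q2_def)
  have s1: "(\<Sum>k=1..m+1. t^k/real k) = P + t^(m+1)/(real m+1)" using P by (simp add: add.commute)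
  define P2 where "P2 = (\<Sum>k=2..m. t^k/real k)"
  have s2: "P = t + P2" unfolding P P2_def using m by (subst sum.atLeast_Suc_atMost) (auto simp: numeral_2_eq_2)
  have Hnn: "0 \<le> H" unfolding H by (rule sum_nonneg) auto
  have P2nn: "0 \<le> P2" unfolding P2_def using t by (intro sum_nonneg) auto
  have "P2 \<le> (\<Sum>k=2..m. t^2/real k)" unfolding P2_def
  proof (rule sum_mono)
    fix k assume "k \<in> {2..m}"
    then have "t^k \<le> t^2" using t by (intro power_decreasing) auto
    then show "t^k/real k \<le> t^2/real k" by (simp add: divide_right_mono)
  qed
  also have "\<dots> \<le> (\<Sum>k=1..m. t^2/real k)" using t by (intro sum_mono2) auto
  also have "\<dots> = H*t^2" unfolding H by (simp add: sum_distrib_right)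
  finally have P2b: "P2 \<le> H*t^2" .
  have tm: "t^m \<le> t^2" "t^(m+1) \<le> t^2" using t m by (intro power_decreasing; simp)+
  have tm1: "t^m \<le> t^1" using t m by (intro power_decreasing) auto
  then have den: "1/2 \<le> 1 - t^m" using t by simp
  have tmp: "0 \<le> t^m" using t by simp
  have lnid: "ln(1-t) = -(Q2 + P + t^(m+1)/(real m+1))" using s1 Q2_def by simp
  have dn: "1 - t^m \<noteq> 0" "real m + 1 \<noteq> 0" using den by auto
  have eq: "(H - P)/(1 - t^m) - ln(1-t) - H - H*t^m + real m/(real m+1)*t^(m+1)
      = t^m*((H*t^m - P2 - t^(m+1))/(1-t^m)) + Q2"
    unfolding lnid s2 using alg[of "t^m" "real m" H t P2 Q2] dn by simp
  have X: "\<bar>H*t^m - P2 - t^(m+1)\<bar> \<le> (2*H+1)*t^2"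
  proof -
    have "0 \<le> t^(m+1)" "0 \<le> H*t^m" using t Hnn by auto
    then show ?thesis using tm P2b P2nn Hnn mult_left_mono[OF tm(1) Hnn] unfolding abs_le_iff by (simp add: algebra_simps)
  qed
  have "\<bar>(H*t^m - P2 - t^(m+1))/(1-t^m)\<bar> \<le> (2*H+1)*t^2 / (1/2)"
    unfolding abs_divide using den X by (intro frac_le) auto
  then have "\<bar>t^m*((H*t^m - P2 - t^(m+1))/(1-t^m))\<bar> \<le> t^m * ((2*H+1)*t^2 / (1/2))"
    unfolding abs_mult using tmp mult_left_mono by fastforce
  also have "t^m * ((2*H+1)*t^2 / (1/2)) = (4*H+2)*t^(m+2)" by (simp add: power_add power2_eq_square algebra_simps)
  finally have B: "\<bar>t^m*((H*t^m - P2 - t^(m+1))/(1-t^m))\<bar> \<le> (4*H+2)*t^(m+2)" .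
  have "(4*H+4)*t^(m+2) = (4*H+2)*t^(m+2) + 2*t^(m+2)" by (simp add: algebra_simps)
  then show ?thesis unfolding eq using B Q2b by linarith
qed

lemma pow_powr: "0 < (x::real) \<Longrightarrow> 0 < m \<Longrightarrow> (x^m) powr (1 + real j / real m) = x^(m+j)"
proof -
  assume x: "0 < x" and m: "0 < m"
  have "(x^m) powr (1 + real j / real m) = (x powr real m) powr (1 + real j / real m)"
    using x by (simp add: powr_realpow)
  also have "\<dots> = x powr (real m * (1 + real j / real m))" by (simp add: powr_powr)
  also have "real m * (1 + real j / real m) = real (m+j)" using m by (simp add: field_simps)
  also have "x powr real (m+j) = x^(m+j)" using x by (rule powr_realpow)
  finally show ?thesis .
qed

lemma pow_root: "0 < (x::real) \<Longrightarrow> 0 < m \<Longrightarrow> (x^m) powr (1 / real m) = x"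
proof -
  assume x: "0 < x" and m: "0 < m"
  have "(x^m) powr (1 / real m) = (x powr real m) powr (1 / real m)"
    using x by (simp add: powr_realpow)
  also have "\<dots> = x powr (real m * (1 / real m))" by (simp add: powr_powr)
  also have "real m * (1 / real m) = 1" using m by simp
  finally show ?thesis using x by simp
qed

lemma root_pow: "0 < (x::real) \<Longrightarrow> 0 < m \<Longrightarrow> (x powr (1 / real m))^m = x"
proof -
  assume x: "0 < x" and m: "0 < m"
  have "(x powr (1 / real m))^m = (x powr (1 / real m)) powr real m"
    using x by (simp add: powr_realpow)
  also have "\<dots> = x powr ((1 / real m) * real m)" by (simp add: powr_powr)
  also have "(1 / real m) * real m = 1" using m by simp
  finally show ?thesis using x by simp
qed

lemma Vpot_eval:
  assumes u: "Uc m = u"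
  shows "Vpot m g (u - u*t) = (1/g) * (u^m * ((\<Sum>k=1..m. 1 / real k) - (\<Sum>k=1..m. t^k / real k)))"
proof -
  have "(\<Sum>k=1..m. (1 / real k) * u ^ (m - k) * (u ^ k - (u - (u - u*t)) ^ k))
      = (\<Sum>k=1..m. u^m * (1 / real k - t^k / real k))"
  proof (rule sum.cong)
    fix k assume k: "k \<in> {1..m}"
    have "u ^ (m - k) * u^k = u^m" using k by (simp add: power_add[symmetric])
    then show "(1 / real k) * u ^ (m - k) * (u ^ k - (u - (u - u*t)) ^ k) = u^m * (1 / real k - t^k / real k)"
      by (simp add: power_mult_distrib algebra_simps diff_divide_distrib)
  qed simp
  also have "\<dots> = u^m * ((\<Sum>k=1..m. 1 / real k) - (\<Sum>k=1..m. t^k / real k))"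
    by (simp add: sum_distrib_left[symmetric] sum_subtractf)
  finally show ?thesis unfolding Vpot_def u by simp
qed


theorem mainTheorem7:
  fixes m :: nat
  assumes "m \<ge> 2"
  shows
    "(\<forall>g>0. Vpot m g 0 = 0)
     \<and> (\<forall>g>0. deriv (Vpot m g) 0 = 1 / g)
     \<and> (\<forall>g>0. \<forall>U. U * deriv (Vpot m g) U = (1 / g) * (Uc m ^ m - (Uc m - U) ^ m))
     \<and> (\<forall>g>0. \<forall>U. U * deriv (Vpot m g) U = 1 \<longleftrightarrow> g = gc m - (Uc m - U) ^ m)
     \<and> (\<forall>g. 0 < g \<and> g < gc m \<longrightarrow> 0 < Ug m g \<and> g = gc m - (Uc m - Ug m g) ^ m)
     \<and> f0 m (gc m) = Hm m - ln (Uc m)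
     \<and> (\<lambda>g. f0 m g - (f0 m (gc m) + Hm m * ((gc m - g) / gc m)
            - real m / (real m + 1) * ((gc m - g) / gc m) powr (1 + 1 / real m)))
       \<in> O[at_left (gc m)](\<lambda>g. (gc m - g) powr (1 + 2 / real m))"
proof -
  define u where "u = Uc m"
  define H where "H = Hm m"
  have m0: "0 < m" using assms by simp
  have u0: "0 < u" unfolding u_def Uc_def using m0 by simp
  have gcu: "gc m = u^m" unfolding gc_def u_def ..
  have gc0: "0 < gc m" using gcu u0 by simp
  have upow: "u^(m-1) = 1 / real m"
  proof -
    have "u^(m-1) = u powr real (m-1)" using u0 by (simp add: powr_realpow)
    also have "\<dots> = real m powr (- 1 / (real m - 1) * real (m-1))"
      unfolding u_def Uc_def by (simp add: powr_powr)
    also have "- 1 / (real m - 1) * real (m-1) = -1" using assms by (simp add: of_nat_diff)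
    finally show ?thesis using m0 by (simp add: powr_minus_divide)
  qed
  have Vfun: "Vpot m g = (\<lambda>U. (1 / g) * (\<Sum>k=1..m. (1 / real k) * u ^ (m - k) * (u ^ k - (u - U) ^ k)))" for g
    by (rule ext) (simp add: Vpot_def u_def)
  have der: "deriv (Vpot m g) U = (1/g) * (\<Sum>k=1..m. u^(m-k)*(u-U)^(k-1))" for g U
    unfolding Vfun by (rule DERIV_imp_deriv[OF hasder])
  have P1: "\<forall>g>0. Vpot m g 0 = 0" by (simp add: Vpot_def)
  have P2: "\<forall>g>0. deriv (Vpot m g) 0 = 1 / g"
  proof (intro allI impI)
    fix g :: real assume "0 < g"
    have "(\<Sum>k=1..m. u^(m-k)*(u-0)^(k-1)) = (\<Sum>k=1..m. u^(m-1))"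
    proof (rule sum.cong)
      fix k assume "k \<in> {1..m}"
      then have "m - k + (k - 1) = m - 1" by auto
      then show "u^(m-k)*(u-0)^(k-1) = u^(m-1)" by (simp add: power_add[symmetric])
    qed simp
    also have "\<dots> = 1" using upow m0 by simp
    finally show "deriv (Vpot m g) 0 = 1 / g" unfolding der by simp
  qed
  have P3: "\<forall>g>0. \<forall>U. U * deriv (Vpot m g) U = (1 / g) * (Uc m ^ m - (Uc m - U) ^ m)"
    unfolding der u_def[symmetric] using geo by (metis mult.left_commute)
  have P4: "\<forall>g>0. \<forall>U. U * deriv (Vpot m g) U = 1 \<longleftrightarrow> g = gc m - (Uc m - U) ^ m"
  proof (intro allI impI)
    fix g U :: real assume g: "0 < g"
    have h: "U * deriv (Vpot m g) U = (1 / g) * (Uc m ^ m - (Uc m - U) ^ m)" using P3 g by blast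
    show "U * deriv (Vpot m g) U = 1 \<longleftrightarrow> g = gc m - (Uc m - U) ^ m"
      unfolding h gc_def using g by (auto simp: field_simps)
  qed
  have P5: "\<forall>g. 0 < g \<and> g < gc m \<longrightarrow> 0 < Ug m g \<and> g = gc m - (Uc m - Ug m g) ^ m"
  proof (intro allI impI)
    fix g assume g: "0 < g \<and> g < gc m"
    have "(gc m - g) powr (1 / real m) < (gc m) powr (1 / real m)"
      using g m0 by (intro powr_less_mono2) auto
    also have "(gc m) powr (1 / real m) = u" unfolding gcu using u0 m0 by (rule pow_root)
    finally have "0 < Ug m g" unfolding Ug_def u_def by simp
    moreover have "(Uc m - Ug m g) ^ m = gc m - g" unfolding Ug_def using g m0 by (simp add: root_pow)
    ultimately show "0 < Ug m g \<and> g = gc m - (Uc m - Ug m g) ^ m" by simp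
  qed
  have Ugc: "Ug m (gc m) = u" unfolding Ug_def u_def by simp
  have Vgc: "Vpot m (gc m) u = H"
    using Vpot_eval[OF u_def[symmetric], of "gc m" 0] gc0 gcu m0 u0
    by (simp add: H_def Hm_def zero_power)
  have P6: "f0 m (gc m) = Hm m - ln (Uc m)"
    using Vgc unfolding f0_def Ugc H_def u_def by simp
  have P7: "(\<lambda>g. f0 m g - (f0 m (gc m) + Hm m * ((gc m - g) / gc m)
            - real m / (real m + 1) * ((gc m - g) / gc m) powr (1 + 1 / real m)))
       \<in> O[at_left (gc m)](\<lambda>g. (gc m - g) powr (1 + 2 / real m))"
  proof (rule bigoI)
    have lt: "gc m - gc m / 2^m < gc m" using gc0 by simp
    show "\<forall>\<^sub>F g in at_left (gc m). norm (f0 m g - (f0 m (gc m) + Hm m * ((gc m - g) / gc m)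
            - real m / (real m + 1) * ((gc m - g) / gc m) powr (1 + 1 / real m)))
        \<le> ((4*H+4) / u^(m+2)) * norm ((gc m - g) powr (1 + 2 / real m))"
      using eventually_at_left_real[OF lt]
    proof (rule eventually_mono)
      fix g assume g: "g \<in> {gc m - gc m / 2^m<..<gc m}"
      define e where "e = gc m - g"
      have e0: "0 < e" "e < gc m / 2^m" using g by (auto simp: e_def)
      define s where "s = e powr (1 / real m)"
      define t where "t = s / u"
      have s0: "0 < s" using e0 by (simp add: s_def)
      have st: "s = u * t" using u0 by (simp add: t_def)
      have t0: "0 < t" using s0 u0 by (simp add: t_def)
      have "s \<le> (gc m / 2^m) powr (1 / real m)" unfolding s_def using e0 by (intro powr_mono2) auto
      also have "gc m / 2^m = (u/2)^m" by (simp add: gcu power_divide)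
      also have "((u/2)^m) powr (1 / real m) = u/2" using u0 m0 by (intro pow_root) auto
      finally have "t \<le> 1/2" using u0 by (simp add: t_def field_simps)
      have sm: "s^m = e" unfolding s_def using e0 m0 by (simp add: root_pow)
      have gt: "g = u^m * (1 - t^m)"
        using sm unfolding st e_def gcu by (simp add: power_mult_distrib algebra_simps)
      have Ut: "Ug m g = u - u*t" unfolding Ug_def u_def[symmetric] e_def[symmetric] s_def[symmetric] st ..
      have tm1: "t^m < 1" using \<open>t \<le> 1/2\<close> t0 m0 by (simp add: power_less_one_iff)
      have um0: "0 < u^m" using u0 by simp
      define P where "P = (\<Sum>k=1..m. t^k / real k)"
      have V: "Vpot m g (Ug m g) = (H - P)/(1 - t^m)"
      proof -
        have "Vpot m g (Ug m g) = (1/g)*(u^m*(H-P))"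
          unfolding Ut Vpot_eval[OF u_def[symmetric]] H_def Hm_def P_def ..
        also have "\<dots> = (H - P)/(1 - t^m)" unfolding gt using um0 tm1 u0 by simp
        finally show ?thesis .
      qed
      have lnU: "ln (Ug m g) = ln u + ln (1 - t)"
      proof -
        have "u - u*t = u*(1-t)" by (simp add: algebra_simps)
        moreover have "ln (u*(1-t)) = ln u + ln (1-t)" using u0 \<open>t \<le> 1/2\<close> by (simp add: ln_mult)
        ultimately show ?thesis unfolding Ut by simp
      qed
      have eg: "gc m - g = e" by (simp add: e_def)
      have r1: "(gc m - g) / gc m = t^m"
        using sm um0 u0 unfolding eg unfolding gcu st by (auto simp: power_mult_distrib)
      have r2: "((gc m - g) / gc m) powr (1 + 1 / real m) = t^(m+1)"
        unfolding r1 using pow_powr[OF t0 m0, of 1] by simp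
      have r3: "(gc m - g) powr (1 + 2 / real m) = u^(m+2) * t^(m+2)"
      proof -
        have "(gc m - g) powr (1 + 2 / real m) = s^(m+2)"
          using pow_powr[OF s0 m0, of 2] unfolding eg sm[symmetric] by simp
        then show ?thesis unfolding st by (simp add: power_mult_distrib)
      qed
      have expr: "f0 m g - (f0 m (gc m) + Hm m * ((gc m - g) / gc m)
            - real m / (real m + 1) * ((gc m - g) / gc m) powr (1 + 1 / real m))
         = (H - P)/(1 - t^m) - ln(1-t) - H - H*t^m + real m/(real m+1)*t^(m+1)"
        unfolding r2 unfolding r1 P6 unfolding f0_def V lnU H_def u_def by simp
      have "\<bar>(H - P)/(1 - t^m) - ln(1-t) - H - H*t^m + real m/(real m+1)*t^(m+1)\<bar> \<le> (4*H+4)*t^(m+2)"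
        by (rule main_est[OF assms t0 \<open>t \<le> 1/2\<close> _ P_def]) (simp add: H_def Hm_def)
      also have "(4*H+4)*t^(m+2) = ((4*H+4) / u^(m+2)) * (u^(m+2) * t^(m+2))"
        using u0 by simp
      finally show "norm (f0 m g - (f0 m (gc m) + Hm m * ((gc m - g) / gc m)
            - real m / (real m + 1) * ((gc m - g) / gc m) powr (1 + 1 / real m)))
        \<le> ((4*H+4) / u^(m+2)) * norm ((gc m - g) powr (1 + 2 / real m))"
        unfolding expr r3 real_norm_def using u0 t0 by simp
    qed
  qed
  show ?thesis using P1 P2 P3 P4 P5 P6 P7 by blast
qed

end
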